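(* Let $\mathcal F^{\mathfrak t}$, $\mathfrak t\in\Delta$, be the translational family generated by a dominated lower triangular $C^1$ IFS $\mathcal F$ on a compact set $S\subset\mathbb R^d$. Then there exists a function $h:(0,r_0)\to(0,\infty)$ with $\lim_{\delta\to0}h(\delta)=0$ such that for every $\delta\in(0,r_0)$ there is $C(\delta)\ge1$ with $$\big\|D_yf^{\mathfrak s}_{\omega}\cdot\big(D^*_{z_1,\dots,z_d}f^{\mathfrak t}_{\omega}\big)^{-1}\big\|\le C(\delta)e^{nh(\delta)}$$ for every $n\in\mathbb N$, $\omega\in\Sigma_n$, $y,z_1,\dots,z_d\in S$ and $\mathfrak s,\mathfrak t\in\Delta$ with $|\mathfrak s-\mathfrak t|<\delta$.
   Context: Dominated lower triangular $C^1$ IFS on a compact $S\subset\mathbb R^d$ with nonempty interior: $\ell\ge2$ maps $f_i$ with (i) $f_i(S)\subset\mathrm{int}(S)$; (ii) a bounded open connected $U\supset S$ such that each $f_i$ extends to a contracting $C^1$ diffeomorphism $f_i:U\to f_i(U)$ with $\overline{f_i(U)}\subset U$; (iii) for each $z\in S$, $D_zf_i$ is lower triangular with $|(D_zf_i)_{11}|\ge\dots\ge|(D_zf_i)_{dd}|$. Translational family: $r_0>0$ is chosen so that $f_i+\mathbf t_i$ maps $S$ into $\mathrm{int}(S)$ for all $i$ whenever $|\mathfrak t|<r_0$, where $\mathfrak t=(\mathbf t_1,\dots,\mathbf t_\ell)\in\mathbb R^{\ell d}$; $\Delta=\{\mathfrak t:|\mathfrak t|<r_0\}$, $f^{\mathfrak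 t}_i=f_i+\mathbf t_i$, and for $\omega=\omega_1\cdots\omega_n\in\Sigma_n=\{1,\dots,\ell\}^n$, $f^{\mathfrak t}_\omega=f^{\mathfrak t}_{\omega_1}\circ\cdots\circ f^{\mathfrak t}_{\omega_n}$. For a $C^1$ map $g=(g_1,\dots,g_d):S\to\mathbb R^d$ and $z_1,\dots,z_d\in S$, $D^*_{z_1,\dots,z_d}g$ is the $d\times d$ matrix whose $i$-th row is $\nabla g_i(z_i)^T$, i.e. $(D^*_{z_1,\dots,z_d}g)_{ij}=(D_{z_i}g)_{ij}$. $\|\cdot\|$ is the operator norm. *)

theory Defs
  imports "HOL-Analysis.Analysis"
begin

abbreviation Dmat :: "(real^'d \<Rightarrow> real^'d) \<Rightarrow> real^'d \<Rightarrow> real^'d^'d" where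
  "Dmat g z \<equiv> jacobian g (at z)"

definition C1_on :: "(real^'d) set \<Rightarrow> (real^'d \<Rightarrow> real^'d) \<Rightarrow> bool" where
  "C1_on U g \<longleftrightarrow> (\<forall>x\<in>U. g differentiable (at x)) \<and> continuous_on U (\<lambda>x. Dmat g x)"

definition contracting_C1_diffeo :: "(real^'d) set \<Rightarrow> (real^'d \<Rightarrow> real^'d) \<Rightarrow> bool" where
  "contracting_C1_diffeo U g \<longleftrightarrow>
     C1_on U g \<and> inj_on g U \<and> open (g ` U) \<and>
     (\<exists>ginv. (\<forall>x\<in>U. ginv (g x) = x) \<and> C1_on (g ` U) ginv) \<and>
     (\<exists>c<1. \<forall>x\<in>U. \<forall>y\<in>U. dist (g x) (g y) \<le> c * dist x y)"

definition dominated_lower_triangular :: "real^('d::{finite,linorder})^('d::{finite,linorder}) \<Rightarrow> bool" where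
  "dominated_lower_triangular M \<longleftrightarrow>
     (\<forall>i j::'d::{finite,linorder}. i < j \<longrightarrow> M $ i $ j = 0) \<and>
     (\<forall>i j::'d::{finite,linorder}. i \<le> j \<longrightarrow> \<bar>M $ j $ j\<bar> \<le> \<bar>M $ i $ i\<bar>)"

definition transl :: "('l \<Rightarrow> real^'d \<Rightarrow> real^'d) \<Rightarrow> real^'d^'l \<Rightarrow> 'l \<Rightarrow> real^'d \<Rightarrow> real^'d" where
  "transl f t i = (\<lambda>x. f i x + t $ i)"

definition word_comp :: "('l \<Rightarrow> 'a \<Rightarrow> 'a) \<Rightarrow> 'l list \<Rightarrow> 'a \<Rightarrow> 'a" where
  "word_comp F w = foldr (\<lambda>i g. F i \<circ> g) w id"

definition Dstar :: "(real^'d \<Rightarrow> real^'d) \<Rightarrow> ('d \<Rightarrow> real^'d) \<Rightarrow> real^'d^'d" where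
  "Dstar g z = (\<chi> i j. (Dmat g (z i)) $ i $ j)"

definition mat_opnorm :: "real^'d^'d \<Rightarrow> real" where
  "mat_opnorm M = onorm (\<lambda>x. M *v x)"

end

theory Submission
  imports Defs
begin



definition rk :: "'d::{finite,linorder} \<Rightarrow> nat" where "rk j = card {k. k < j}"

lemma rk_le: "rk (j::'d::{finite,linorder}) \<le> CARD('d)"
  unfolding rk_def by (rule card_mono) auto

lemma rk_less: "(k::'d::{finite,linorder}) < j \<Longrightarrow> rk k < rk j"
  unfolding rk_def by (rule psubset_card_mono) auto

lemma sum_split_lower:
  fixes g :: "'d::{finite,linorder} \<Rightarrow> 'a::comm_monoid_add"
  assumes "\<And>k. a < k \<Longrightarrow> g k = 0"
  shows "sum g UNIV = g a + sum g {k. k < a}"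
proof -
  have "sum g UNIV = sum g (insert a {k. k < a})"
  proof (rule sum.mono_neutral_right)
    show "\<forall>i\<in>UNIV - insert a {k. k<a}. g i = 0"
    proof
      fix i assume "i \<in> UNIV - insert a {k. k < a}"
      hence "a < i" by (auto simp: not_less order.order_iff_strict)
      thus "g i = 0" by (rule assms)
    qed
  qed auto
  also have "\<dots> = g a + sum g {k. k<a}" by (simp add: sum.insert)
  finally show ?thesis .
qed

lemma permutes_le_id:
  fixes p :: "'d::{finite,linorder} \<Rightarrow> 'd"
  assumes "p permutes UNIV" "\<And>i. p i \<le> i"
  shows "p = id"
proof
  fix i :: 'd
  let ?T = "{k. k \<le> i}"
  have inj: "inj_on p ?T" using permutes_inj[OF assms(1)] by (metis inj_on_subset subset_UNIV)
  have sub: "p ` ?T \<subseteq> ?T" using assms(2) order_trans by blast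
  have "p ` ?T = ?T" by (rule endo_inj_surj) (auto simp: inj sub)
  then obtain k where k: "k \<le> i" "p k = i"
    by (metis (mono_tags, lifting) imageE mem_Collect_eq order_refl)
  with assms(2)[of k] have "k = i" by auto
  then show "p i = id i" using k by simp
qed

lemma det_lower_lin:
  fixes A :: "real^('n::{finite,linorder})^('n::{finite,linorder})"
  assumes ld: "\<And>i j. i < j \<Longrightarrow> A$i$j = 0"
  shows "det A = prod (\<lambda>i. A$i$i) (UNIV:: 'n set)"
proof -
  let ?U = "UNIV:: 'n set"
  let ?PU = "{p. p permutes ?U}"
  let ?pp = "\<lambda>p. of_int (sign p) * prod (\<lambda>i. A$i$p i) (UNIV :: 'n set)"
  have fU: "finite ?U"
    by simp
  have id0: "{id} \<subseteq> ?PU"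
    by (auto simp: permutes_id)
  have p0: "\<forall>p \<in> ?PU - {id}. ?pp p = 0"
  proof
    fix p
    assume p: "p \<in> ?PU - {id}"
    have "p \<noteq> id" "p permutes ?U" using p by auto
    then have "\<not>(\<forall>i. p i \<le> i)" using permutes_le_id by blast
    then obtain i where "\<not> p i \<le> i" by blast
    hence i: "p i > i" by simp
    from ld[OF i] have "\<exists>i \<in> ?U. A$i$p i = 0"
      by blast
    with prod_zero[OF fU] show "?pp p = 0"
      by force
  qed
  from sum.mono_neutral_cong_left[OF finite_permutations[OF fU] id0 p0] show ?thesis
    unfolding det_def by (simp add: sign_id)
qed

lemma solve_bound:
  fixes M N :: "real^('d::{finite,linorder})^('d::{finite,linorder})" and H :: real and u :: "real^('d::{finite,linorder})"
  assumes low: "\<And>i j. i < j \<Longrightarrow> N$i$j = 0"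
    and HN: "\<And>j k. \<bar>N$j$k\<bar> \<le> H * \<bar>N$k$k\<bar>"
    and H0: "H \<ge> 0"
  shows "\<bar>u$j\<bar> * \<bar>N$j$j\<bar> \<le> (1 + real CARD('d) * H)^(rk j) * norm (N *v u)"
proof -
  define E where "E = 1 + real CARD('d) * H"
  define W where "W = norm (N *v u)"
  have E1: "E \<ge> 1" using H0 by (simp add: E_def)
  have W0: "W \<ge> 0" by (simp add: W_def)
  have "\<forall>j. rk j = r \<longrightarrow> \<bar>u$j\<bar> * \<bar>N$j$j\<bar> \<le> E^r * W" for r
  proof (induction r rule: less_induct)
    case (less r)
    show ?case
    proof (intro allI impI)
      fix j :: 'd assume rj: "rk j = r"
      have "(N *v u)$j = (\<Sum>k\<in>UNIV. N$j$k * u$k)" by (simp add: matrix_vector_mult_def)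
      also have "\<dots> = N$j$j * u$j + (\<Sum>k\<in>{k. k<j}. N$j$k * u$k)"
        by (rule sum_split_lower) (simp add: low)
      finally have eq: "N$j$j * u$j = (N *v u)$j - (\<Sum>k\<in>{k. k<j}. N$j$k * u$k)" by simp
      have b1: "\<bar>(N *v u)$j\<bar> \<le> W" unfolding W_def by (rule component_le_norm_cart)
      have b2: "\<bar>N$j$k * u$k\<bar> \<le> H * E^(r-1) * W" if "k < j" for k
      proof -
        have rk: "rk k < r" using rk_less[OF that] rj by simp
        have ih: "\<bar>u$k\<bar> * \<bar>N$k$k\<bar> \<le> E^(rk k) * W" using less.IH[OF rk] by blast
        have "E^(rk k) \<le> E^(r-1)" using rk E1 by (intro power_increasing) auto
        hence ih2: "\<bar>u$k\<bar> * \<bar>N$k$k\<bar> \<le> E^(r-1) * W" using ih W0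
          by (meson mult_right_mono order_trans)
        have "\<bar>N$j$k * u$k\<bar> = \<bar>N$j$k\<bar> * \<bar>u$k\<bar>" by (simp add: abs_mult)
        also have "\<dots> \<le> H * \<bar>N$k$k\<bar> * \<bar>u$k\<bar>" using HN[of j k] by (simp add: mult_right_mono)
        also have "\<dots> = H * (\<bar>u$k\<bar> * \<bar>N$k$k\<bar>)" by simp
        also have "\<dots> \<le> H * (E^(r-1) * W)" using ih2 H0 by (rule mult_left_mono)
        finally show ?thesis by simp
      qed
      have "\<bar>\<Sum>k\<in>{k. k<j}. N$j$k * u$k\<bar> \<le> (\<Sum>k\<in>{k. k<j}. \<bar>N$j$k * u$k\<bar>)" by (rule sum_abs)
      also have "\<dots> \<le> (\<Sum>k\<in>{k. k<j}. H * E^(r-1) * W)" by (rule sum_mono, rule b2, simp)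
      also have "\<dots> = real r * (H * E^(r-1) * W)" using rj by (simp add: rk_def)
      finally have b3: "\<bar>\<Sum>k\<in>{k. k<j}. N$j$k * u$k\<bar> \<le> real r * (H * E^(r-1) * W)" .
      have "\<bar>u$j\<bar> * \<bar>N$j$j\<bar> = \<bar>N$j$j * u$j\<bar>" by (simp add: abs_mult)
      also have "\<dots> \<le> W + real r * (H * E^(r-1) * W)" unfolding eq using b1 b3 by linarith
      also have "\<dots> \<le> E^r * W"
      proof (cases r)
        case 0 then show ?thesis by simp
      next
        case (Suc q)
        have rd: "real r \<le> real CARD('d)" using rk_le[of j] rj by simp
        have Eq1: "E^q \<ge> 1" using E1 by simp
        have "W + real r * (H * E^(r-1) * W) = W * (1 + real r * H * E^q)" using Suc by (simp add: algebra_simps)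
        also have "\<dots> \<le> W * (E^q + real CARD('d) * H * E^q)"
        proof (rule mult_left_mono[OF _ W0])
          have "real r * H * E^q \<le> real CARD('d) * H * E^q"
            using rd H0 Eq1 by (intro mult_right_mono) auto
          then show "1 + real r * H * E ^ q \<le> E ^ q + real CARD('d) * H * E ^ q" using Eq1 by linarith
        qed
        also have "\<dots> = E^r * W" using Suc by (simp add: E_def algebra_simps)
        finally show ?thesis .
      qed
      finally show "\<bar>u$j\<bar> * \<bar>N$j$j\<bar> \<le> E^r * W" .
    qed
  qed
  then show ?thesis unfolding E_def W_def by blast
qed

lemma main_matrix_bound:
  fixes M N :: "real^('d::{finite,linorder})^('d::{finite,linorder})" and H :: real and u :: "real^('d::{finite,linorder})"
  assumes low: "\<And>i j. i < j \<Longrightarrow> N$i$j = 0"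
    and HN: "\<And>j k. \<bar>N$j$k\<bar> \<le> H * \<bar>N$k$k\<bar>"
    and HM: "\<And>i j. \<bar>M$i$j\<bar> \<le> H * \<bar>N$j$j\<bar>"
    and H1: "H \<ge> 1"
  shows "norm (M *v u) \<le> (2 * real CARD('d) * H)^(CARD('d) + 2) * norm (N *v u)"
proof -
  define d where "d = real CARD('d)"
  define E where "E = 1 + d * H"
  define W where "W = norm (N *v u)"
  have d1: "d \<ge> 1" unfolding d_def by simp
  have E1: "E \<ge> 1" using H1 d1 by (simp add: E_def)
  have W0: "W \<ge> 0" by (simp add: W_def)
  have uj: "\<bar>u$j\<bar> * \<bar>N$j$j\<bar> \<le> E^CARD('d) * W" for j
  proof -
    have "\<bar>u$j\<bar> * \<bar>N$j$j\<bar> \<le> E^(rk j) * W"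
      using solve_bound[OF low HN, of u j] H1 by (simp add: E_def W_def d_def)
    also have "\<dots> \<le> E^CARD('d) * W" using E1 rk_le[of j] W0
      by (intro mult_right_mono power_increasing) auto
    finally show ?thesis .
  qed
  have comp: "\<bar>(M *v u)$i\<bar> \<le> d * (H * (E^CARD('d) * W))" for i
  proof -
    have "\<bar>(M *v u)$i\<bar> = \<bar>\<Sum>j\<in>UNIV. M$i$j * u$j\<bar>" by (simp add: matrix_vector_mult_def)
    also have "\<dots> \<le> (\<Sum>j\<in>UNIV. \<bar>M$i$j * u$j\<bar>)" by (rule sum_abs)
    also have "\<dots> \<le> (\<Sum>j\<in>(UNIV::'d set). H * (E^CARD('d) * W))"
    proof (rule sum_mono)
      fix j :: 'd
      have "\<bar>M$i$j * u$j\<bar> = \<bar>M$i$j\<bar> * \<bar>u$j\<bar>" by (simp add: abs_mult)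
      also have "\<dots> \<le> H * \<bar>N$j$j\<bar> * \<bar>u$j\<bar>" using HM[of i j] by (simp add: mult_right_mono)
      also have "\<dots> = H * (\<bar>u$j\<bar> * \<bar>N$j$j\<bar>)" by simp
      also have "\<dots> \<le> H * (E^CARD('d) * W)" using uj[of j] H1 by (intro mult_left_mono) auto
      finally show "\<bar>M$i$j * u$j\<bar> \<le> H * (E^CARD('d) * W)" .
    qed
    also have "\<dots> = d * (H * (E^CARD('d) * W))" by (simp add: d_def)
    finally show ?thesis .
  qed
  have "norm (M *v u) \<le> (\<Sum>i\<in>UNIV. \<bar>(M *v u)$i\<bar>)" by (rule norm_le_l1_cart)
  also have "\<dots> \<le> (\<Sum>i\<in>(UNIV::'d set). d * (H * (E^CARD('d) * W)))" by (rule sum_mono) (rule comp)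
  also have "\<dots> = d * d * H * E^CARD('d) * W" by (simp add: d_def)
  also have "\<dots> \<le> (2 * d * H)^(CARD('d) + 2) * W"
  proof (rule mult_right_mono[OF _ W0])
    have dH1: "d \<le> d*H" using mult_left_mono[of 1 H d] H1 d1 by simp
    have dH2: "H \<le> d*H" using mult_right_mono[of 1 d H] H1 d1 by simp
    have dH3: "1 \<le> d*H" using dH2 H1 by linarith
    have dH4: "1 \<le> H*d" using dH3 by (simp add: mult.commute)
    note dH = dH1 dH2 dH3 dH4
    have "E \<le> 2 * d * H" using dH by (simp add: E_def)
    hence e: "E^CARD('d) \<le> (2*d*H)^CARD('d)" using E1 by (intro power_mono) auto
    have "d * d * H * E^CARD('d) = d * H * d * E^CARD('d)" by simp
    also have "\<dots> \<le> (2*d*H) * (2*d*H) * (2*d*H)^CARD('d)"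
    proof -
      have a: "d * H \<le> 2*d*H" using dH by linarith
      have b: "d \<le> 2*d*H" using dH by linarith
      have c: "d * H * d \<le> (2*d*H) * (2*d*H)" using a b d1 H1 by (intro mult_mono) auto
      show ?thesis using c e E1 d1 H1 by (intro mult_mono) auto
    qed
    also have "\<dots> = (2 * d * H)^(CARD('d) + 2)" by (simp add: power_add power2_eq_square)
    finally show "d * d * H * E^CARD('d) \<le> (2 * d * H)^(CARD('d) + 2)" .
  qed
  finally show ?thesis by (simp add: d_def W_def)
qed




fun Pm :: "('l \<Rightarrow> real^'d \<Rightarrow> real^'d) \<Rightarrow> real^'d^'l \<Rightarrow> 'l list \<Rightarrow> real^'d \<Rightarrow> real^'d^'d" where
  "Pm f s [] y = mat 1"
| "Pm f s (i#w) y = Dmat (f i) (word_comp (transl f s) w y) ** Pm f s w y"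

fun sig :: "('l \<Rightarrow> real^'d \<Rightarrow> real^'d) \<Rightarrow> real^'d^'l \<Rightarrow> 'l list \<Rightarrow> real^'d \<Rightarrow> 'd \<Rightarrow> real" where
  "sig f s [] y j = 0"
| "sig f s (i#w) y j = ln \<bar>Dmat (f i) (word_comp (transl f s) w y) $ j $ j\<bar> + sig f s w y j"

lemma word_comp_Nil[simp]: "word_comp F [] = id"
  by (simp add: word_comp_def)

lemma word_comp_Cons: "word_comp F (i#w) = F i \<circ> word_comp F w"
  by (simp add: word_comp_def)

lemma word_comp_transl_Cons[simp]: "word_comp (transl f s) (i#w) y = f i (word_comp (transl f s) w y) + s $ i"
  by (simp add: word_comp_def transl_def)

lemma jac_eq:
  fixes g :: "real^'n \<Rightarrow> real^'m"
  assumes "(g has_derivative (\<lambda>v. P *v v)) (at y)"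
  shows "jacobian g (at y) = P"
proof -
  have "g differentiable (at y)" using assms by (rule differentiableI)
  then have "(g has_derivative (\<lambda>h. jacobian g (at y) *v h)) (at y)" by (simp add: jacobian_works)
  from has_derivative_unique[OF this assms] have "(\<lambda>h. jacobian g (at y) *v h) = (\<lambda>v. P *v v)" .
  then show ?thesis by (metis matrix_of_matrix_vector_mul)
qed

lemma finite_min_eta:
  fixes P :: "'a \<Rightarrow> real \<Rightarrow> bool"
  assumes "finite A"
    and "\<And>a. a \<in> A \<Longrightarrow> \<exists>\<eta>>0. \<forall>\<eta>'. 0 < \<eta>' \<longrightarrow> \<eta>' \<le> \<eta> \<longrightarrow> P a \<eta>'"
  shows "\<exists>\<eta>>0. \<forall>\<eta>'. 0 < \<eta>' \<longrightarrow> \<eta>' \<le> \<eta> \<longrightarrow> (\<forall>a\<in>A. P a \<eta>')"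
  using assms
proof (induction A rule: finite_induct)
  case empty then show ?case by (intro exI[of _ 1]) auto
next
  case (insert x F)
  obtain \<eta>1 where e1: "\<eta>1 > 0" "\<forall>\<eta>'. 0 < \<eta>' \<longrightarrow> \<eta>' \<le> \<eta>1 \<longrightarrow> (\<forall>a\<in>F. P a \<eta>')"
    using insert by blast
  obtain \<eta>2 where e2: "\<eta>2 > 0" "\<forall>\<eta>'. 0 < \<eta>' \<longrightarrow> \<eta>' \<le> \<eta>2 \<longrightarrow> P x \<eta>'"
    using insert by blast
  show ?case using e1 e2 by (intro exI[of _ "min \<eta>1 \<eta>2"]) auto
qed

lemma poly_exp_bound:
  fixes x \<delta> :: real and p :: nat
  assumes "x \<ge> 0" "\<delta> > 0"
  shows "(x + 1)^p \<le> (real p / \<delta> + 1)^p * exp (\<delta> * (x + 1))"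
proof (cases "p = 0")
  case True then show ?thesis using assms by (simp add: zero_le_mult_iff)
next
  case False
  define y where "y = \<delta> * (x+1) / real p"
  have y0: "y \<ge> 0" using assms by (simp add: y_def)
  have "x + 1 = (real p / \<delta>) * y" using False assms by (simp add: y_def field_simps)
  also have "\<dots> \<le> (real p / \<delta>) * exp y" using assms y0
    by (intro mult_left_mono) (auto intro: order_trans[OF _ exp_ge_add_one_self])
  also have "\<dots> \<le> (real p / \<delta> + 1) * exp y" by (intro mult_right_mono) auto
  finally have b: "x + 1 \<le> (real p / \<delta> + 1) * exp y" .
  have "(x + 1)^p \<le> ((real p / \<delta> + 1) * exp y)^p" using b assms by (intro power_mono) auto
  also have "\<dots> = (real p / \<delta> + 1)^p * exp (real p * y)" by (simp add: power_mult_distrib exp_of_nat_mult)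
  also have "real p * y = \<delta> * (x+1)" using False by (simp add: y_def)
  finally show ?thesis .
qed

lemma sum_min_bound:
  fixes g :: "nat \<Rightarrow> real"
  assumes "\<And>k. g k \<le> a + (if k < K0 then B else 0)" "B \<ge> 0"
  shows "(\<Sum>k<n. g k) \<le> real (min n K0) * B + real n * a"
proof (induction n)
  case 0 then show ?case by simp
next
  case (Suc n)
  have "(\<Sum>k<Suc n. g k) = (\<Sum>k<n. g k) + g n" by simp
  also have "\<dots> \<le> real (min n K0) * B + real n * a + (a + (if n < K0 then B else 0))"
    using Suc assms(1)[of n] by linarith
  also have "\<dots> \<le> real (min (Suc n) K0) * B + real (Suc n) * a"
    using assms(2) by (cases "n < K0") (auto simp: min_def algebra_simps)
  finally show ?case .
qed




locale ifs =
  fixes S U :: "(real^('d::{finite,linorder})) set"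
    and f :: "'l::finite \<Rightarrow> real^('d::{finite,linorder}) \<Rightarrow> real^('d::{finite,linorder})"
    and r0 :: real
  assumes S_compact: "compact S"
    and U_open: "open U"
    and S_U: "S \<subseteq> U"
    and diffeo: "\<forall>i. contracting_C1_diffeo U (f i) \<and> closure (f i ` U) \<subseteq> U"
    and dom: "\<forall>i. \<forall>z\<in>S. dominated_lower_triangular (Dmat (f i) z)"
    and r0_pos: "r0 > 0"
    and r0_trans: "\<forall>t::real^('d::{finite,linorder})^'l. norm t < r0 \<longrightarrow> (\<forall>i. transl f t i ` S \<subseteq> interior S)"
begin

lemma orb_in: "norm s < r0 \<Longrightarrow> y \<in> S \<Longrightarrow> word_comp (transl f s) w y \<in> S"
proof (induction w)
  case Nil then show ?case by simp
next
  case (Cons i w)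
  have "transl f s i (word_comp (transl f s) w y) \<in> interior S"
    using r0_trans Cons by blast
  then show ?case using interior_subset by (auto simp: word_comp_Cons)
qed

lemma Df_has: "p \<in> U \<Longrightarrow> (f i has_derivative (\<lambda>v. Dmat (f i) p *v v)) (at p)"
  using diffeo unfolding contracting_C1_diffeo_def C1_on_def by (metis jacobian_works)

lemma transl_has: "p \<in> U \<Longrightarrow> (transl f s i has_derivative (\<lambda>v. Dmat (f i) p *v v)) (at p)"
  unfolding transl_def by (rule has_derivative_add_const[OF Df_has])

lemma A_low: "p \<in> S \<Longrightarrow> a < b \<Longrightarrow> Dmat (f i) p $ a $ b = 0"
  using dom unfolding dominated_lower_triangular_def by blast

lemma A_dom: "p \<in> S \<Longrightarrow> a \<le> b \<Longrightarrow> \<bar>Dmat (f i) p $ b $ b\<bar> \<le> \<bar>Dmat (f i) p $ a $ a\<bar>"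
  using dom unfolding dominated_lower_triangular_def by blast

lemma A_diag: assumes p: "p \<in> S" shows "Dmat (f i) p $ j $ j \<noteq> 0"
proof -
  have pU: "p \<in> U" using p S_U by auto
  obtain ginv where gi: "\<forall>x\<in>U. ginv (f i x) = x" and gC: "C1_on (f i ` U) ginv"
    using diffeo unfolding contracting_C1_diffeo_def by blast
  define A where "A = Dmat (f i) p"
  define B where "B = Dmat ginv (f i p)"
  have "ginv differentiable (at (f i p))" using gC pU unfolding C1_on_def by blast
  then have dg: "(ginv has_derivative (\<lambda>v. B *v v)) (at (f i p))"
    unfolding B_def by (simp add: jacobian_works)
  have df: "(f i has_derivative (\<lambda>v. A *v v)) (at p)" unfolding A_def using Df_has[OF pU] .
  have d1: "((ginv \<circ> f i) has_derivative ((\<lambda>v. B *v v) \<circ> (\<lambda>v. A *v v))) (at p)"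
    by (rule diff_chain_at[OF df dg])
  have d2: "((ginv \<circ> f i) has_derivative (\<lambda>v. v)) (at p)"
    by (rule has_derivative_transform_within_open[OF has_derivative_ident U_open pU]) (simp add: gi)
  have "((\<lambda>v. B *v v) \<circ> (\<lambda>v. A *v v)) = (\<lambda>v. v)" by (rule has_derivative_unique[OF d1 d2])
  then have "\<forall>v. (B ** A) *v v = mat 1 *v v"
    by (metis comp_apply matrix_vector_mul_assoc matrix_vector_mul_lid)
  then have "B ** A = mat 1" by (simp add: matrix_eq)
  then have "invertible A" using invertible_left_inverse by blast
  then have "det A \<noteq> 0" by (simp add: invertible_det_nz)
  moreover have "det A = prod (\<lambda>k. A$k$k) UNIV"
    by (rule det_lower_lin) (simp add: A_def A_low[OF p])
  ultimately show ?thesis unfolding A_def by auto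
qed

lemma orb_deriv:
  assumes "norm s < r0" "y \<in> S"
  shows "(word_comp (transl f s) w has_derivative (\<lambda>v. Pm f s w y *v v)) (at y)"
proof (induction w)
  case Nil
  show ?case by (simp add: id_def has_derivative_ident)
next
  case (Cons i w)
  let ?q = "word_comp (transl f s) w y"
  have qU: "?q \<in> U" using orb_in[OF assms] S_U by auto
  have "((transl f s i \<circ> word_comp (transl f s) w) has_derivative
        ((\<lambda>v. Dmat (f i) ?q *v v) \<circ> (\<lambda>v. Pm f s w y *v v))) (at y)"
    by (rule diff_chain_at[OF Cons transl_has[OF qU]])
  moreover have "((\<lambda>v. Dmat (f i) ?q *v v) \<circ> (\<lambda>v. Pm f s w y *v v)) = (\<lambda>v. Pm f s (i#w) y *v v)"
    by (simp add: o_def matrix_vector_mul_assoc)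
  ultimately show ?case by (metis word_comp_Cons)
qed

lemma Dmat_orb:
  assumes "norm s < r0" "y \<in> S"
  shows "Dmat (word_comp (transl f s) w) y = Pm f s w y"
  by (rule jac_eq[OF orb_deriv[OF assms]])

end



context ifs
begin

lemma Pm_facts:
  assumes s: "norm s < r0" and y: "y \<in> S"
    and K: "\<And>i p a b. p \<in> S \<Longrightarrow> \<bar>Dmat (f i) p $ a $ b\<bar> \<le> K"
    and bet: "\<And>i p j. p \<in> S \<Longrightarrow> real CARD('d) * K \<le> \<beta> * \<bar>Dmat (f i) p $ j $ j\<bar>"
    and b1: "\<beta> \<ge> 1"
  shows "(\<forall>a b. a < b \<longrightarrow> Pm f s w y $ a $ b = 0) \<and>
         (\<forall>j. \<bar>Pm f s w y $ j $ j\<bar> = exp (sig f s w y j)) \<and>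
         (\<forall>a b. \<bar>Pm f s w y $ a $ b\<bar> \<le> (\<beta> * (real (length w) + 1))^(rk a) * exp (sig f s w y b))"
proof (induction w)
  case Nil
  have "\<bar>Pm f s [] y $ a $ b\<bar> \<le> \<beta>^(rk a)" for a b
  proof -
    have "\<bar>Pm f s [] y $ a $ b\<bar> \<le> 1" by (simp add: mat_def)
    also have "1 \<le> \<beta>^(rk a)" using b1 by simp
    finally show ?thesis .
  qed
  then show ?case by (simp add: mat_def)
next
  case (Cons i w)
  define q where "q = word_comp (transl f s) w y"
  define A where "A = Dmat (f i) q"
  define P where "P = Pm f s w y"
  define n where "n = length w"
  have qS: "q \<in> S" unfolding q_def by (rule orb_in[OF s y])
  have PM: "Pm f s (i#w) y = A ** P" by (simp add: A_def P_def q_def)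
  have SG: "sig f s (i#w) y j = ln \<bar>A$j$j\<bar> + sig f s w y j" for j by (simp add: A_def q_def)
  have Plow: "\<And>a b. a < b \<Longrightarrow> P$a$b = 0" and Pd: "\<And>j. \<bar>P$j$j\<bar> = exp (sig f s w y j)"
    and Pb: "\<And>a b. \<bar>P$a$b\<bar> \<le> (\<beta> * (real n + 1))^(rk a) * exp (sig f s w y b)"
    using Cons by (auto simp: P_def n_def)
  have Alow: "\<And>a b. a < b \<Longrightarrow> A$a$b = 0" unfolding A_def using A_low[OF qS] .
  have AK: "\<And>a b. \<bar>A$a$b\<bar> \<le> K" unfolding A_def using K[OF qS] .
  have Ad: "\<And>j. \<bar>A$j$j\<bar> = exp (ln \<bar>A$j$j\<bar>)" using A_diag[OF qS] by (simp add: A_def)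
  have ent: "(A ** P)$a$b = A$a$a * P$a$b + (\<Sum>k\<in>{k. k<a}. A$a$k * P$k$b)" for a b
  proof -
    have "(A ** P)$a$b = (\<Sum>k\<in>UNIV. A$a$k * P$k$b)" by (simp add: matrix_matrix_mult_def)
    also have "\<dots> = A$a$a * P$a$b + (\<Sum>k\<in>{k. k<a}. A$a$k * P$k$b)"
      by (rule sum_split_lower) (simp add: Alow)
    finally show ?thesis .
  qed
  have low': "(A ** P)$a$b = 0" if ab: "a < b" for a b
  proof -
    have "(\<Sum>k\<in>{k. k<a}. A$a$k * P$k$b) = 0"
      by (rule sum.neutral) (use ab in \<open>auto intro!: Plow\<close>)
    then show ?thesis using ent[of a b] Plow[OF ab] by simp
  qed
  have diag': "\<bar>(A ** P)$j$j\<bar> = exp (sig f s (i#w) y j)" for j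
  proof -
    have "(\<Sum>k\<in>{k. k<j}. A$j$k * P$k$j) = 0"
      by (rule sum.neutral) (auto intro!: Plow)
    then have "(A ** P)$j$j = A$j$j * P$j$j" using ent[of j j] by simp
    then have "\<bar>(A ** P)$j$j\<bar> = \<bar>A$j$j\<bar> * \<bar>P$j$j\<bar>" by (simp add: abs_mult)
    also have "\<dots> = exp (ln \<bar>A$j$j\<bar>) * exp (sig f s w y j)" using Ad[of j] Pd[of j] by simp
    also have "\<dots> = exp (sig f s (i#w) y j)" by (simp add: A_def q_def exp_add)
    finally show ?thesis .
  qed
  have bound': "\<bar>(A ** P)$a$b\<bar> \<le> (\<beta> * (real (Suc n) + 1))^(rk a) * exp (sig f s (i#w) y b)" for a b
  proof -
    define G where "G = \<beta> * (real n + 1)"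
    define G' where "G' = \<beta> * (real (Suc n) + 1)"
    define r where "r = rk a"
    define e where "e = exp (sig f s w y b)"
    define \<phi> where "\<phi> = \<bar>A$b$b\<bar>"
    have G1: "G \<ge> 1" using mult_mono[of 1 \<beta> 1 "real n + 1"] b1 by (simp add: G_def)
    have GG': "G' = G + \<beta>" by (simp add: G_def G'_def algebra_simps)
    have e0: "e > 0" by (simp add: e_def)
    have ph0: "\<phi> \<ge> 0" by (simp add: \<phi>_def)
    have K0: "K \<ge> 0" using AK[of a b] by linarith
    have ephi: "exp (sig f s (i#w) y b) = \<phi> * e"
      using Ad[of b] by (simp add: A_def q_def exp_add e_def \<phi>_def)
    have T1: "\<bar>A$a$a\<bar> * \<bar>P$a$b\<bar> \<le> G^r * (\<phi> * e)"
    proof (cases "a < b")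
      case True then show ?thesis using Plow[OF True] G1 ph0 e0 by simp
    next
      case False
      then have "b \<le> a" by simp
      then have "\<bar>A$a$a\<bar> \<le> \<phi>" unfolding \<phi>_def A_def by (rule A_dom[OF qS])
      moreover have "\<bar>P$a$b\<bar> \<le> G^r * e" using Pb[of a b] by (simp add: G_def r_def e_def)
      ultimately have "\<bar>A$a$a\<bar> * \<bar>P$a$b\<bar> \<le> \<phi> * (G^r * e)"
        by (intro mult_mono) auto
      then show ?thesis by (simp add: algebra_simps)
    qed
    have T2: "(\<Sum>k\<in>{k. k<a}. \<bar>A$a$k\<bar> * \<bar>P$k$b\<bar>) \<le> real r * (K * (G^(r-1) * e))"
    proof -
      have "(\<Sum>k\<in>{k. k<a}. \<bar>A$a$k\<bar> * \<bar>P$k$b\<bar>) \<le> (\<Sum>k\<in>{k. k<a}. K * (G^(r-1) * e))"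
      proof (rule sum_mono)
        fix k assume "k \<in> {k. k < a}"
        then have "rk k < r" unfolding r_def by (simp add: rk_less)
        then have gg: "G^(rk k) \<le> G^(r-1)" using G1 by (intro power_increasing) auto
        have "\<bar>P$k$b\<bar> \<le> G^(rk k) * e" using Pb[of k b] by (simp add: G_def e_def)
        also have "\<dots> \<le> G^(r-1) * e" by (rule mult_right_mono[OF gg]) (use e0 in auto)
        finally have "\<bar>P$k$b\<bar> \<le> G^(r-1) * e" .
        then show "\<bar>A$a$k\<bar> * \<bar>P$k$b\<bar> \<le> K * (G^(r-1) * e)"
          using AK[of a k] by (intro mult_mono) auto
      qed
      also have "\<dots> = real r * (K * (G^(r-1) * e))" by (simp add: r_def rk_def)
      finally show ?thesis .
    qed
    have "\<bar>(A ** P)$a$b\<bar> \<le> \<bar>A$a$a * P$a$b\<bar> + \<bar>\<Sum>k\<in>{k. k<a}. A$a$k * P$k$b\<bar>"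
      unfolding ent by (rule abs_triangle_ineq)
    also have "\<dots> \<le> \<bar>A$a$a\<bar> * \<bar>P$a$b\<bar> + (\<Sum>k\<in>{k. k<a}. \<bar>A$a$k\<bar> * \<bar>P$k$b\<bar>)"
      by (intro add_mono) (auto simp: abs_mult intro: order_trans[OF sum_abs])
    also have "\<dots> \<le> G^r * (\<phi> * e) + real r * (K * (G^(r-1) * e))" using T1 T2 by linarith
    also have "\<dots> \<le> G'^r * (\<phi> * e)"
    proof (cases r)
      case 0 then show ?thesis by simp
    next
      case (Suc m)
      have rd: "real r * K \<le> \<beta> * \<phi>"
      proof -
        have "real r \<le> real CARD('d)" using rk_le[of a] by (simp add: r_def)
        then have "real r * K \<le> real CARD('d) * K" using K0 by (rule mult_right_mono)
        also have "\<dots> \<le> \<beta> * \<phi>" unfolding \<phi>_def A_def by (rule bet[OF qS])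
        finally show ?thesis .
      qed
      have Gm: "G^m \<ge> 0" using G1 by simp
      have "real r * (K * (G^(r-1) * e)) = (real r * K) * (G^m * e)" using Suc by simp
      also have "\<dots> \<le> (\<beta> * \<phi>) * (G^m * e)" using rd Gm e0 by (intro mult_right_mono) auto
      finally have x: "real r * (K * (G^(r-1) * e)) \<le> (\<beta> * \<phi>) * (G^m * e)" .
      have "G^r * (\<phi> * e) + (\<beta> * \<phi>) * (G^m * e) = G^m * G' * (\<phi> * e)"
        using Suc by (simp add: GG' algebra_simps)
      also have "\<dots> \<le> G'^m * G' * (\<phi> * e)"
        using G1 b1 ph0 e0 GG' by (intro mult_right_mono power_mono) auto
      also have "\<dots> = G'^r * (\<phi> * e)" using Suc by simp
      finally show ?thesis using x by linarith
    qed
    finally have fin: "\<bar>(A ** P)$a$b\<bar> \<le> G'^r * (\<phi> * e)" .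
    show ?thesis unfolding ephi using fin by (simp add: G'_def r_def)
  qed
  show ?case unfolding PM using low' diag' bound' by (simp add: n_def)
qed

end



context ifs
begin

lemma contr: "\<exists>c. 0 \<le> c \<and> c < 1 \<and> (\<forall>i x y. x \<in> U \<longrightarrow> y \<in> U \<longrightarrow> dist (f i x) (f i y) \<le> c * dist x y)"
proof -
  have "\<forall>i. \<exists>c<1. \<forall>x\<in>U. \<forall>y\<in>U. dist (f i x) (f i y) \<le> c * dist x y"
    using diffeo unfolding contracting_C1_diffeo_def by blast
  then obtain cf where cf: "\<forall>i. cf i < 1 \<and> (\<forall>x\<in>U. \<forall>y\<in>U. dist (f i x) (f i y) \<le> cf i * dist x y)"
    by metis
  define c where "c = Max (range (\<lambda>i. max 0 (cf i)))"
  have fin: "finite (range (\<lambda>i. max 0 (cf i)))" by simp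
  have ge: "max 0 (cf i) \<le> c" for i unfolding c_def by (rule Max_ge[OF fin]) auto
  have "c \<in> range (\<lambda>i. max 0 (cf i))" unfolding c_def by (rule Max_in[OF fin]) auto
  then have lt: "c < 1" using cf by auto
  have c0: "0 \<le> c" using ge[of undefined] by simp
  have "dist (f i x) (f i y) \<le> c * dist x y" if "x \<in> U" "y \<in> U" for i x y
  proof -
    have "dist (f i x) (f i y) \<le> cf i * dist x y" using cf that by blast
    also have "\<dots> \<le> c * dist x y" using ge[of i] by (intro mult_right_mono) auto
    finally show ?thesis .
  qed
  then show ?thesis using c0 lt by blast
qed

lemma Dmat_cont: "continuous_on S (\<lambda>p. Dmat (f i) p)"
  using diffeo S_U unfolding contracting_C1_diffeo_def C1_on_def
  by (meson continuous_on_subset)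

lemma Phi_cont: "continuous_on S (\<lambda>p. ln \<bar>Dmat (f i) p $ j $ j\<bar>)"
proof -
  have c1: "continuous_on S (\<lambda>p. Dmat (f i) p $ j $ j)"
    by (intro continuous_on_component Dmat_cont)
  have c2: "continuous_on S (\<lambda>p. \<bar>Dmat (f i) p $ j $ j\<bar>)"
    using continuous_on_rabs[OF c1] .
  show ?thesis by (rule continuous_on_ln[OF c2]) (auto simp: A_diag)
qed

lemma Lbound: "\<exists>L. \<forall>i j p. p \<in> S \<longrightarrow> \<bar>ln \<bar>Dmat (f i) p $ j $ j\<bar>\<bar> \<le> L"
proof -
  have "bounded (\<Union>ij\<in>UNIV. (\<lambda>p. ln \<bar>Dmat (f (fst ij)) p $ snd ij $ snd ij\<bar>) ` S)"
    by (rule bounded_UN) (auto intro!: compact_imp_bounded compact_continuous_image Phi_cont S_compact)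
  then obtain L where L: "\<forall>x\<in>(\<Union>ij\<in>UNIV. (\<lambda>p. ln \<bar>Dmat (f (fst ij)) p $ snd ij $ snd ij\<bar>) ` S). \<bar>x\<bar> \<le> L"
    by (auto simp: bounded_real)
  show ?thesis
  proof (intro exI allI impI)
    fix i j p assume "p \<in> S"
    then show "\<bar>ln \<bar>Dmat (f i) p $ j $ j\<bar>\<bar> \<le> L" using L by force
  qed
qed

lemma Kbound: "\<exists>K. \<forall>i p a b. p \<in> S \<longrightarrow> \<bar>Dmat (f i) p $ a $ b\<bar> \<le> K"
proof -
  have "bounded (\<Union>i\<in>UNIV. (\<lambda>p. Dmat (f i) p) ` S)"
    by (rule bounded_UN) (auto intro!: compact_imp_bounded compact_continuous_image Dmat_cont S_compact)
  then obtain K where K: "\<forall>x\<in>(\<Union>i\<in>UNIV. (\<lambda>p. Dmat (f i) p) ` S). norm x \<le> K"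
    by (auto simp: bounded_iff)
  show ?thesis
  proof (intro exI allI impI)
    fix i p a b assume "p \<in> S"
    then have "norm (Dmat (f i) p) \<le> K" using K by blast
    moreover have "\<bar>Dmat (f i) p $ a $ b\<bar> \<le> norm (Dmat (f i) p $ a)" by (rule component_le_norm_cart)
    moreover have "norm (Dmat (f i) p $ a) \<le> norm (Dmat (f i) p)" by (rule Finite_Cartesian_Product.norm_nth_le)
    ultimately show "\<bar>Dmat (f i) p $ a $ b\<bar> \<le> K" by linarith
  qed
qed

lemma unif:
  assumes "\<epsilon> > 0"
  shows "\<exists>\<eta>>0. \<forall>i j p q. p \<in> S \<longrightarrow> q \<in> S \<longrightarrow> dist p q < \<eta> \<longrightarrow>
            \<bar>ln \<bar>Dmat (f i) p $ j $ j\<bar> - ln \<bar>Dmat (f i) q $ j $ j\<bar>\<bar> < \<epsilon>"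
proof -
  let ?P = "\<lambda>ij \<eta>. \<forall>p\<in>S. \<forall>q\<in>S. dist p q < \<eta> \<longrightarrow>
     \<bar>ln \<bar>Dmat (f (fst ij)) p $ snd ij $ snd ij\<bar> - ln \<bar>Dmat (f (fst ij)) q $ snd ij $ snd ij\<bar>\<bar> < \<epsilon>"
  have "\<exists>\<eta>>0. \<forall>\<eta>'. 0 < \<eta>' \<longrightarrow> \<eta>' \<le> \<eta> \<longrightarrow> (\<forall>ij\<in>UNIV. ?P ij \<eta>')"
  proof (rule finite_min_eta)
    fix ij :: "'l \<times> 'd"
    have "uniformly_continuous_on S (\<lambda>p. ln \<bar>Dmat (f (fst ij)) p $ snd ij $ snd ij\<bar>)"
      by (rule compact_uniformly_continuous[OF Phi_cont S_compact])
    then obtain d where d: "d > 0" "\<forall>x\<in>S. \<forall>x'\<in>S. dist x' x < d \<longrightarrow>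
        dist (ln \<bar>Dmat (f (fst ij)) x' $ snd ij $ snd ij\<bar>) (ln \<bar>Dmat (f (fst ij)) x $ snd ij $ snd ij\<bar>) < \<epsilon>"
      unfolding uniformly_continuous_on_def using assms by blast
    show "\<exists>\<eta>>0. \<forall>\<eta>'. 0 < \<eta>' \<longrightarrow> \<eta>' \<le> \<eta> \<longrightarrow> ?P ij \<eta>'"
    proof (intro exI[of _ d] conjI allI impI ballI)
      fix \<eta>' p q assume "0 < \<eta>'" "\<eta>' \<le> d" "p \<in> S" "q \<in> S" "dist p q < \<eta>'"
      then show "\<bar>ln \<bar>Dmat (f (fst ij)) p $ snd ij $ snd ij\<bar> - ln \<bar>Dmat (f (fst ij)) q $ snd ij $ snd ij\<bar>\<bar> < \<epsilon>"
        using d(2) by (auto simp: dist_real_def)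
    qed (use d in auto)
  qed simp
  then obtain \<eta> where "\<eta> > 0" "\<forall>ij\<in>UNIV. ?P ij \<eta>" by auto
  then show ?thesis by (intro exI[of _ \<eta>]) force
qed

definition Lc where "Lc = (SOME L. \<forall>i j p. p \<in> S \<longrightarrow> \<bar>ln \<bar>Dmat (f i) p $ j $ j\<bar>\<bar> \<le> L)"

lemma Lc: "p \<in> S \<Longrightarrow> \<bar>ln \<bar>Dmat (f i) p $ j $ j\<bar>\<bar> \<le> Lc"
  unfolding Lc_def using someI_ex[OF Lbound] by blast

definition md :: "real \<Rightarrow> real" where
  "md r = Sup ({0} \<union> {\<bar>ln \<bar>Dmat (f i) p $ j $ j\<bar> - ln \<bar>Dmat (f i) q $ j $ j\<bar>\<bar> | i j p q. p \<in> S \<and> q \<in> S \<and> dist p q \<le> r})"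

lemma md_elem: "p \<in> S \<Longrightarrow> q \<in> S \<Longrightarrow> \<bar>ln \<bar>Dmat (f i) p $ j $ j\<bar> - ln \<bar>Dmat (f i) q $ j $ j\<bar>\<bar> \<le> 2 * \<bar>Lc\<bar>"
  using Lc[of p i j] Lc[of q i j] by linarith

lemma md_bdd: "bdd_above ({0} \<union> {\<bar>ln \<bar>Dmat (f i) p $ j $ j\<bar> - ln \<bar>Dmat (f i) q $ j $ j\<bar>\<bar> | i j p q. p \<in> S \<and> q \<in> S \<and> dist p q \<le> r})"
  by (rule bdd_aboveI[of _ "2 * \<bar>Lc\<bar>"]) (auto intro: md_elem)

lemma md_upper: "p \<in> S \<Longrightarrow> q \<in> S \<Longrightarrow> dist p q \<le> r \<Longrightarrow> \<bar>ln \<bar>Dmat (f i) p $ j $ j\<bar> - ln \<bar>Dmat (f i) q $ j $ j\<bar>\<bar> \<le> md r"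
  unfolding md_def by (rule cSup_upper[OF _ md_bdd]) blast

lemma md_ge0: "0 \<le> md r"
  unfolding md_def by (rule cSup_upper[OF _ md_bdd]) blast

lemma md_le: "md r \<le> 2 * \<bar>Lc\<bar>"
  unfolding md_def by (rule cSup_least) (auto intro: md_elem)

lemma md_mono: "r \<le> r' \<Longrightarrow> md r \<le> md r'"
  unfolding md_def by (rule cSup_subset_mono[OF _ md_bdd]) force+

lemma md_small: "\<epsilon> > 0 \<Longrightarrow> \<exists>\<eta>>0. \<forall>r. r < \<eta> \<longrightarrow> md r \<le> \<epsilon>"
proof -
  assume e: "\<epsilon> > 0"
  obtain \<eta> where \<eta>: "\<eta> > 0" "\<forall>i j p q. p \<in> S \<longrightarrow> q \<in> S \<longrightarrow> dist p q < \<eta> \<longrightarrow>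
            \<bar>ln \<bar>Dmat (f i) p $ j $ j\<bar> - ln \<bar>Dmat (f i) q $ j $ j\<bar>\<bar> < \<epsilon>"
    using unif[OF e] by blast
  show ?thesis
  proof (intro exI[of _ \<eta>] conjI allI impI)
    fix r assume r: "r < \<eta>"
    show "md r \<le> \<epsilon>" unfolding md_def
    proof (rule cSup_least)
      fix x assume "x \<in> {0} \<union> {\<bar>ln \<bar>Dmat (f i) p $ j $ j\<bar> - ln \<bar>Dmat (f i) q $ j $ j\<bar>\<bar> | i j p q. p \<in> S \<and> q \<in> S \<and> dist p q \<le> r}"
      then show "x \<le> \<epsilon>"
      proof
        assume "x \<in> {0}" then show ?thesis using e by simp
      next
        assume "x \<in> {\<bar>ln \<bar>Dmat (f i) p $ j $ j\<bar> - ln \<bar>Dmat (f i) q $ j $ j\<bar>\<bar> | i j p q. p \<in> S \<and> q \<in> S \<and> dist p q \<le> r}"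
        then obtain i j p q where x: "x = \<bar>ln \<bar>Dmat (f i) p $ j $ j\<bar> - ln \<bar>Dmat (f i) q $ j $ j\<bar>\<bar>"
          and pq: "p \<in> S" "q \<in> S" "dist p q \<le> r" by blast
        have "dist p q < \<eta>" using pq r by linarith
        then have "\<bar>ln \<bar>Dmat (f i) p $ j $ j\<bar> - ln \<bar>Dmat (f i) q $ j $ j\<bar>\<bar> < \<epsilon>"
          using \<eta>(2) pq by blast
        then show "x \<le> \<epsilon>" using x by simp
      qed
    qed simp
  qed (use \<eta> in auto)
qed

lemma orb_dist:
  assumes s: "norm s < r0" and t: "norm t < r0" and st: "norm (s - t) \<le> \<delta>"
    and y: "y \<in> S" and z: "z \<in> S"
    and c: "0 \<le> c" "c < 1" "\<forall>i x y. x \<in> U \<longrightarrow> y \<in> U \<longrightarrow> dist (f i x) (f i y) \<le> c * dist x y"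
  shows "dist (word_comp (transl f s) w y) (word_comp (transl f t) w z) \<le> c^(length w) * diameter S + \<delta> / (1 - c)"
proof (induction w)
  case Nil
  have "dist y z \<le> diameter S" by (rule diameter_bounded_bound[OF compact_imp_bounded[OF S_compact] y z])
  moreover have "\<delta> \<ge> 0" using st norm_ge_zero order_trans by blast
  moreover have "\<delta> / (1 - c) \<ge> 0" using c \<open>\<delta> \<ge> 0\<close> by simp
  ultimately show ?case by simp
next
  case (Cons i w)
  define p where "p = word_comp (transl f s) w y"
  define q where "q = word_comp (transl f t) w z"
  have pU: "p \<in> U" using orb_in[OF s y] S_U by (auto simp: p_def)
  have qU: "q \<in> U" using orb_in[OF t z] S_U by (auto simp: q_def)
  have "dist (f i p + s $ i) (f i q + t $ i) = norm ((f i p - f i q) + (s - t) $ i)"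
    by (simp add: dist_norm algebra_simps)
  also have "\<dots> \<le> norm (f i p - f i q) + norm ((s - t) $ i)" by (rule norm_triangle_ineq)
  also have "\<dots> \<le> c * dist p q + \<delta>"
  proof (rule add_mono)
    show "norm (f i p - f i q) \<le> c * dist p q" using c(3) pU qU by (simp add: dist_norm)
    show "norm ((s - t) $ i) \<le> \<delta>" using Finite_Cartesian_Product.norm_nth_le[of "s - t" i] st by linarith
  qed
  also have "\<dots> \<le> c * (c^(length w) * diameter S + \<delta> / (1 - c)) + \<delta>"
    using Cons c by (simp add: p_def q_def mult_left_mono)
  also have "\<dots> = c^(length (i#w)) * diameter S + \<delta> / (1 - c)"
    using c by (simp add: field_simps)
  finally show ?case by (simp add: p_def q_def)
qed

lemma sig_diff:
  assumes s: "norm s < r0" and t: "norm t < r0" and st: "norm (s - t) \<le> \<delta>"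
    and y: "y \<in> S" and z: "z \<in> S"
    and c: "0 \<le> c" "c < 1" "\<forall>i x y. x \<in> U \<longrightarrow> y \<in> U \<longrightarrow> dist (f i x) (f i y) \<le> c * dist x y"
  shows "sig f s w y j - sig f t w z j \<le> (\<Sum>k<length w. md (c^k * diameter S + \<delta> / (1 - c)))"
proof (induction w)
  case Nil then show ?case by simp
next
  case (Cons i w)
  define p where "p = word_comp (transl f s) w y"
  define q where "q = word_comp (transl f t) w z"
  have pS: "p \<in> S" using orb_in[OF s y] by (auto simp: p_def)
  have qS: "q \<in> S" using orb_in[OF t z] by (auto simp: q_def)
  have dpq: "dist p q \<le> c^(length w) * diameter S + \<delta> / (1 - c)"
    unfolding p_def q_def by (rule orb_dist[OF s t st y z c])
  have "ln \<bar>Dmat (f i) p $ j $ j\<bar> - ln \<bar>Dmat (f i) q $ j $ j\<bar> \<le> md (dist p q)"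
    using md_upper[OF pS qS order_refl, of i j] by linarith
  also have "\<dots> \<le> md (c^(length w) * diameter S + \<delta> / (1 - c))" by (rule md_mono[OF dpq])
  finally have a: "ln \<bar>Dmat (f i) p $ j $ j\<bar> - ln \<bar>Dmat (f i) q $ j $ j\<bar> \<le> md (c^(length w) * diameter S + \<delta> / (1 - c))" .
  have "sig f s (i#w) y j - sig f t (i#w) z j = (ln \<bar>Dmat (f i) p $ j $ j\<bar> - ln \<bar>Dmat (f i) q $ j $ j\<bar>) + (sig f s w y j - sig f t w z j)"
    by (simp add: p_def q_def)
  also have "\<dots> \<le> md (c^(length w) * diameter S + \<delta> / (1 - c)) + (\<Sum>k<length w. md (c^k * diameter S + \<delta> / (1 - c)))"
    using a Cons by linarith
  also have "\<dots> = (\<Sum>k<length (i#w). md (c^k * diameter S + \<delta> / (1 - c)))" by simp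
  finally show ?case .
qed

end



context ifs
begin

lemma main_bound_fixed:
  assumes c: "0 \<le> c" "c < 1" "\<forall>i x y. x \<in> U \<longrightarrow> y \<in> U \<longrightarrow> dist (f i x) (f i y) \<le> c * dist x y"
    and K: "\<And>i p a b. p \<in> S \<Longrightarrow> \<bar>Dmat (f i) p $ a $ b\<bar> \<le> K"
    and bet: "\<And>i p j. p \<in> S \<Longrightarrow> real CARD('d) * K \<le> \<beta> * \<bar>Dmat (f i) p $ j $ j\<bar>"
    and b1: "\<beta> \<ge> 1"
    and d0: "\<delta> > 0"
    and K0: "\<And>k. md (c^k * diameter S + \<delta> / (1 - c)) \<le> md (2 * \<delta> / (1 - c)) + (if k < K0 then 2 * \<bar>Lc\<bar> else 0)"
    and y: "y \<in> S" and z: "\<forall>k. z k \<in> S"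
    and s: "norm s < r0" and t: "norm t < r0" and st: "norm (s - t) \<le> \<delta>"
  shows "mat_opnorm (Dmat (word_comp (transl f s) \<omega>) y ** matrix_inv (Dstar (word_comp (transl f t) \<omega>) z))
           \<le> (2 * real CARD('d) * (\<beta> * (real (length \<omega>) + 1))^CARD('d) *
               exp (real K0 * (2 * \<bar>Lc\<bar>) + real (length \<omega>) * md (2 * \<delta> / (1 - c))))^(CARD('d) + 2)"
proof -
  define n where "n = length \<omega>"
  define md2 where "md2 = md (2 * \<delta> / (1 - c))"
  define R where "R = exp (real K0 * (2 * \<bar>Lc\<bar>) + real n * md2)"
  define G where "G = \<beta> * (real n + 1)"
  define H where "H = G^CARD('d) * R"
  define M where "M = Pm f s \<omega> y"
  define N where "N = (\<chi> a b. Pm f t \<omega> (z a) $ a $ b)"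
  have G1: "G \<ge> 1" using mult_mono[of 1 \<beta> 1 "real n + 1"] b1 by (simp add: G_def)
  have R1: "R \<ge> 1" unfolding R_def md2_def using md_ge0 by (intro one_le_exp_iff[THEN iffD2] add_nonneg_nonneg mult_nonneg_nonneg) auto
  have H1: "H \<ge> 1" unfolding H_def using mult_mono[of 1 "G^CARD('d)" 1 R] G1 R1 by (simp add: one_le_power)
  have ratio: "exp (sig f s' \<omega> y' j) \<le> R * exp (sig f t' \<omega> z' j)"
    if "norm s' < r0" "norm t' < r0" "norm (s' - t') \<le> \<delta>" "y' \<in> S" "z' \<in> S" for s' t' y' z' j
  proof -
    have "sig f s' \<omega> y' j - sig f t' \<omega> z' j \<le> (\<Sum>k<n. md (c^k * diameter S + \<delta> / (1 - c)))"
      unfolding n_def by (rule sig_diff[OF that c])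
    also have "\<dots> \<le> real (min n K0) * (2 * \<bar>Lc\<bar>) + real n * md2"
      unfolding md2_def by (rule sum_min_bound[OF K0]) simp
    also have "\<dots> \<le> real K0 * (2 * \<bar>Lc\<bar>) + real n * md2"
      by (intro add_right_mono mult_right_mono) auto
    finally have "sig f s' \<omega> y' j \<le> (real K0 * (2 * \<bar>Lc\<bar>) + real n * md2) + sig f t' \<omega> z' j" by linarith
    then have "exp (sig f s' \<omega> y' j) \<le> exp ((real K0 * (2 * \<bar>Lc\<bar>) + real n * md2) + sig f t' \<omega> z' j)" by simp
    also have "\<dots> = R * exp (sig f t' \<omega> z' j)" by (simp add: R_def exp_add)
    finally show ?thesis .
  qed
  have PMs: "(\<forall>a b. a < b \<longrightarrow> Pm f s \<omega> y $ a $ b = 0) \<and>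
         (\<forall>j. \<bar>Pm f s \<omega> y $ j $ j\<bar> = exp (sig f s \<omega> y j)) \<and>
         (\<forall>a b. \<bar>Pm f s \<omega> y $ a $ b\<bar> \<le> G^(rk a) * exp (sig f s \<omega> y b))"
    using Pm_facts[OF s y K bet b1] by (simp add: G_def n_def)
  have PMt: "(\<forall>a b. a < b \<longrightarrow> Pm f t \<omega> (z x) $ a $ b = 0) \<and>
         (\<forall>j. \<bar>Pm f t \<omega> (z x) $ j $ j\<bar> = exp (sig f t \<omega> (z x) j)) \<and>
         (\<forall>a b. \<bar>Pm f t \<omega> (z x) $ a $ b\<bar> \<le> G^(rk a) * exp (sig f t \<omega> (z x) b))" for x
    using Pm_facts[OF t z[rule_format] K bet b1] by (simp add: G_def n_def)
  have Gd: "G^(rk a) \<le> G^CARD('d)" for a :: 'd using G1 rk_le[of a] by (intro power_increasing) auto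
  have low: "\<And>i j. i < j \<Longrightarrow> N$i$j = 0" using PMt by (simp add: N_def)
  have Nd: "\<bar>N$k$k\<bar> = exp (sig f t \<omega> (z k) k)" for k using PMt by (simp add: N_def)
  have HN: "\<bar>N$j$k\<bar> \<le> H * \<bar>N$k$k\<bar>" for j k
  proof -
    have "\<bar>N$j$k\<bar> \<le> G^(rk j) * exp (sig f t \<omega> (z j) k)" using PMt by (simp add: N_def)
    also have "\<dots> \<le> G^CARD('d) * (R * exp (sig f t \<omega> (z k) k))"
      using Gd[of j] ratio[OF t t _ z[rule_format] z[rule_format], of j k] d0 G1
      by (intro mult_mono) auto
    also have "\<dots> = H * \<bar>N$k$k\<bar>" by (simp add: H_def Nd)
    finally show ?thesis .
  qed
  have HM: "\<bar>M$i$j\<bar> \<le> H * \<bar>N$j$j\<bar>" for i j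
  proof -
    have "\<bar>M$i$j\<bar> \<le> G^(rk i) * exp (sig f s \<omega> y j)" using PMs by (simp add: M_def)
    also have "\<dots> \<le> G^CARD('d) * (R * exp (sig f t \<omega> (z j) j))"
      using Gd[of i] ratio[OF s t st y z[rule_format], of j] G1
      by (intro mult_mono) auto
    also have "\<dots> = H * \<bar>N$j$j\<bar>" by (simp add: H_def Nd)
    finally show ?thesis .
  qed
  have MN: "norm (M *v u) \<le> (2 * real CARD('d) * H)^(CARD('d) + 2) * norm (N *v u)" for u
    by (rule main_matrix_bound[OF low HN HM H1])
  have DM: "Dmat (word_comp (transl f s) \<omega>) y = M" unfolding M_def by (rule Dmat_orb[OF s y])
  have DN: "Dstar (word_comp (transl f t) \<omega>) z = N"
    unfolding N_def Dstar_def using Dmat_orb[OF t z[rule_format]] by simp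
  have "det N = prod (\<lambda>k. N$k$k) UNIV" by (rule det_lower_lin[OF low])
  also have "\<dots> \<noteq> 0" using Nd by (simp add: prod_zero_iff) (metis abs_zero exp_not_eq_zero)
  finally have "invertible N" by (simp add: invertible_det_nz)
  then have "N ** matrix_inv N = mat 1 \<and> matrix_inv N ** N = mat 1"
    unfolding matrix_inv_def invertible_def by (rule someI_ex)
  then have NI: "N ** matrix_inv N = mat 1" by simp
  have "mat_opnorm (M ** matrix_inv N) \<le> (2 * real CARD('d) * H)^(CARD('d) + 2)"
    unfolding mat_opnorm_def
  proof (rule onorm_le)
    fix v
    have "norm ((M ** matrix_inv N) *v v) = norm (M *v (matrix_inv N *v v))"
      by (simp add: matrix_vector_mul_assoc)
    also have "\<dots> \<le> (2 * real CARD('d) * H)^(CARD('d) + 2) * norm (N *v (matrix_inv N *v v))" by (rule MN)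
    also have "N *v (matrix_inv N *v v) = v" by (simp add: matrix_vector_mul_assoc NI)
    finally show "norm ((M ** matrix_inv N) *v v) \<le> (2 * real CARD('d) * H)^(CARD('d) + 2) * norm v" .
  qed
  then show ?thesis unfolding DM DN H_def G_def R_def n_def md2_def by (simp add: mult.assoc)
qed

end



context ifs
begin

lemma main:
  "\<exists>h::real \<Rightarrow> real.
     (\<forall>\<delta>\<in>{0<..<r0}. h \<delta> > 0) \<and> (h \<longlongrightarrow> 0) (at_right 0) \<and>
     (\<forall>\<delta>\<in>{0<..<r0}. \<exists>C\<ge>1.
        \<forall>n::nat. \<forall>\<omega>::'l list. length \<omega> = n \<longrightarrow>
        (\<forall>y\<in>S. \<forall>z. (\<forall>k. z k \<in> S) \<longrightarrow>
         (\<forall>s t. norm s < r0 \<longrightarrow> norm t < r0 \<longrightarrow> norm (s - t) < \<delta> \<longrightarrow>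
           mat_opnorm (Dmat (word_comp (transl f s) \<omega>) y **
                       matrix_inv (Dstar (word_comp (transl f t) \<omega>) z))
             \<le> C * exp (real n * h \<delta>))))"
proof -
  obtain c where c: "0 \<le> c" "c < 1" "\<forall>i x y. x \<in> U \<longrightarrow> y \<in> U \<longrightarrow> dist (f i x) (f i y) \<le> c * dist x y"
    using contr by blast
  obtain K where K: "\<And>i p a b. p \<in> S \<Longrightarrow> \<bar>Dmat (f i) p $ a $ b\<bar> \<le> K" using Kbound by blast
  define dd where "dd = real CARD('d)"
  define \<beta> where "\<beta> = max 1 (dd * \<bar>K\<bar> * exp Lc)"
  have b1: "\<beta> \<ge> 1" by (simp add: \<beta>_def)
  have bet: "real CARD('d) * K \<le> \<beta> * \<bar>Dmat (f i) p $ j $ j\<bar>" if p: "p \<in> S" for i p j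
  proof -
    have "ln \<bar>Dmat (f i) p $ j $ j\<bar> \<ge> - Lc" using Lc[OF p, of i j] by linarith
    then have "exp (- Lc) \<le> exp (ln \<bar>Dmat (f i) p $ j $ j\<bar>)" by simp
    also have "\<dots> = \<bar>Dmat (f i) p $ j $ j\<bar>" using A_diag[OF p, of i j] by simp
    finally have "exp (- Lc) \<le> \<bar>Dmat (f i) p $ j $ j\<bar>" .
    then have e: "1 \<le> exp Lc * \<bar>Dmat (f i) p $ j $ j\<bar>"
      by (simp add: exp_minus field_simps)
    have "real CARD('d) * K \<le> dd * \<bar>K\<bar>" by (simp add: dd_def)
    also have "\<dots> \<le> dd * \<bar>K\<bar> * (exp Lc * \<bar>Dmat (f i) p $ j $ j\<bar>)"
      using mult_left_mono[OF e, of "dd * \<bar>K\<bar>"] by (simp add: dd_def)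
    also have "\<dots> = (dd * \<bar>K\<bar> * exp Lc) * \<bar>Dmat (f i) p $ j $ j\<bar>" by simp
    also have "\<dots> \<le> \<beta> * \<bar>Dmat (f i) p $ j $ j\<bar>" by (intro mult_right_mono) (auto simp: \<beta>_def)
    finally show ?thesis .
  qed
  define h where "h = (\<lambda>\<delta>::real. real (CARD('d) + 2) * md (2 * \<delta> / (1 - c)) + \<delta>)"
  have hpos: "\<forall>\<delta>\<in>{0<..<r0}. h \<delta> > 0"
    using md_ge0 by (auto simp: h_def intro!: add_nonneg_pos)
  have hlim: "(h \<longlongrightarrow> 0) (at_right 0)"
    unfolding tendsto_iff
  proof (intro allI impI)
    fix e :: real assume e: "e > 0"
    define e1 where "e1 = e / (2 * real (CARD('d) + 2))"
    have e1: "e1 > 0" using e by (simp add: e1_def)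
    obtain \<eta> where \<eta>: "\<eta> > 0" "\<forall>r. r < \<eta> \<longrightarrow> md r \<le> e1" using md_small[OF e1] by blast
    show "\<forall>\<^sub>F x in at_right 0. dist (h x) 0 < e"
      unfolding eventually_at_right_field
    proof (intro exI[of _ "min (e/2) (\<eta> * (1 - c) / 2)"] conjI allI impI)
      show "0 < min (e/2) (\<eta> * (1 - c) / 2)" using e \<eta> c by simp
      fix \<delta> :: real assume d0: "\<delta> > 0" and db: "\<delta> < min (e/2) (\<eta> * (1 - c) / 2)"
      have "2 * \<delta> < \<eta> * (1 - c)" using db by simp
      then have "2 * \<delta> / (1 - c) < \<eta>" using c by (simp add: divide_less_eq)
      then have m: "md (2 * \<delta> / (1 - c)) \<le> e1" using \<eta> by blast
      have "real (CARD('d) + 2) * md (2 * \<delta> / (1 - c)) \<le> real (CARD('d) + 2) * e1"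
        using m by (intro mult_left_mono) auto
      also have "\<dots> = e / 2"
      proof -
        have pos: "real (CARD('d) + 2) > 0" by simp
        have gen: "x * (e / (2 * x)) = e / 2" if "x > 0" for x :: real using that by simp
        show ?thesis unfolding e1_def by (rule gen[OF pos])
      qed
      finally have "h \<delta> < e" using db by (simp add: h_def)
      moreover have "h \<delta> \<ge> 0" using md_ge0[of "2 * \<delta> / (1 - c)"] d0 by (simp add: h_def)
      ultimately show "dist (h \<delta>) 0 < e" by simp
    qed
  qed
  have hbound: "\<exists>C\<ge>1.
        \<forall>n::nat. \<forall>\<omega>::'l list. length \<omega> = n \<longrightarrow>
        (\<forall>y\<in>S. \<forall>z. (\<forall>k. z k \<in> S) \<longrightarrow>
         (\<forall>s t. norm s < r0 \<longrightarrow> norm t < r0 \<longrightarrow> norm (s - t) < \<delta> \<longrightarrow>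
           mat_opnorm (Dmat (word_comp (transl f s) \<omega>) y **
                       matrix_inv (Dstar (word_comp (transl f t) \<omega>) z))
             \<le> C * exp (real n * h \<delta>)))" if dr: "\<delta> \<in> {0<..<r0}" for \<delta>
  proof -
    have d0: "\<delta> > 0" using dr by simp
    define \<delta>' where "\<delta>' = \<delta> / (1 - c)"
    have d'0: "\<delta>' > 0" using d0 c by (simp add: \<delta>'_def)
    define D where "D = diameter S"
    have D0: "D \<ge> 0" unfolding D_def by (rule diameter_ge_0[OF compact_imp_bounded[OF S_compact]])
    obtain K0 where K0: "c^K0 < \<delta>' / (D + 1)"
      using real_arch_pow_inv[of "\<delta>' / (D + 1)" c] d'0 D0 c by auto
    have cK0: "c^K0 * D \<le> \<delta>'"
    proof -
      have "c^K0 * D \<le> c^K0 * (D + 1)" using c by (intro mult_left_mono) auto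
      also have "\<dots> \<le> \<delta>'" using K0 D0 by (simp add: pos_less_divide_eq less_imp_le)
      finally show ?thesis .
    qed
    have K0b: "md (c^k * diameter S + \<delta> / (1 - c)) \<le> md (2 * \<delta> / (1 - c)) + (if k < K0 then 2 * \<bar>Lc\<bar> else 0)" for k
    proof (cases "k < K0")
      case True then show ?thesis using md_le md_ge0[of "2 * \<delta> / (1 - c)"] by (simp add: add_increasing)
    next
      case False
      have "c^k \<le> c^K0" using False c by (intro power_decreasing) auto
      then have "c^k * D \<le> \<delta>'" using cK0 D0 by (meson mult_right_mono order_trans)
      then have "c^k * diameter S + \<delta> / (1 - c) \<le> 2 * \<delta> / (1 - c)" by (simp add: D_def \<delta>'_def)
      then show ?thesis using False md_mono by simp
    qed
    define p where "p = CARD('d) * (CARD('d) + 2)"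
    define C0 where "C0 = 2 * dd * \<beta>^CARD('d) * exp (real K0 * (2 * \<bar>Lc\<bar>))"
    define Cf where "Cf = max 1 (C0^(CARD('d) + 2) * (real p / \<delta> + 1)^p * exp \<delta>)"
    show ?thesis
    proof (intro exI[of _ Cf] conjI allI impI ballI)
      show "Cf \<ge> 1" by (simp add: Cf_def)
      fix n :: nat and \<omega> :: "'l list" and y :: "real^('d::{finite,linorder})" and z :: "('d::{finite,linorder}) \<Rightarrow> real^('d::{finite,linorder})" and s t :: "real^('d::{finite,linorder})^'l"
      assume ln: "length \<omega> = n" and y: "y \<in> S" and z: "\<forall>k. z k \<in> S"
        and s: "norm s < r0" and t: "norm t < r0" and st: "norm (s - t) < \<delta>"
      define md2 where "md2 = md (2 * \<delta> / (1 - c))"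
      have C00: "C0 \<ge> 0" using b1 by (simp add: C0_def dd_def)
      have C0p: "C0^(CARD('d) + 2) \<ge> 0" using C00 by (rule zero_le_power)
      have "mat_opnorm (Dmat (word_comp (transl f s) \<omega>) y ** matrix_inv (Dstar (word_comp (transl f t) \<omega>) z))
           \<le> (2 * real CARD('d) * (\<beta> * (real (length \<omega>) + 1))^CARD('d) *
               exp (real K0 * (2 * \<bar>Lc\<bar>) + real (length \<omega>) * md (2 * \<delta> / (1 - c))))^(CARD('d) + 2)"
        by (rule main_bound_fixed[OF c K bet b1 d0 K0b y z s t]) (assumption, assumption, rule less_imp_le[OF st])
      also have "\<dots> = (C0 * (real n + 1)^CARD('d) * exp (real n * md2))^(CARD('d) + 2)"
        by (simp add: C0_def dd_def md2_def ln exp_add power_mult_distrib mult_ac)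
      also have "\<dots> = C0^(CARD('d) + 2) * (real n + 1)^p * exp (real n * md2)^(CARD('d) + 2)"
        by (simp only: power_mult_distrib p_def power_mult)
      also have "\<dots> \<le> C0^(CARD('d) + 2) * ((real p / \<delta> + 1)^p * exp (\<delta> * (real n + 1))) * exp (real n * md2)^(CARD('d) + 2)"
        using poly_exp_bound[of "real n" \<delta> p] d0 C0p by (intro mult_right_mono mult_left_mono) (auto simp del: power_Suc)
      also have "\<dots> = (C0^(CARD('d) + 2) * (real p / \<delta> + 1)^p * exp \<delta>) * exp (real n * h \<delta>)"
      proof -
        have "exp (real n * md2)^(CARD('d) + 2) = exp (real (CARD('d) + 2) * (real n * md2))"
          by (simp only: exp_of_nat_mult)
        moreover have "exp (\<delta> * (real n + 1)) = exp \<delta> * exp (real n * \<delta>)"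
          by (simp add: exp_add[symmetric] algebra_simps)
        moreover have "exp (real n * h \<delta>) = exp (real (CARD('d) + 2) * (real n * md2)) * exp (real n * \<delta>)"
          by (simp add: h_def md2_def exp_add[symmetric] algebra_simps)
        ultimately show ?thesis by (simp add: mult_ac)
      qed
      also have "\<dots> \<le> Cf * exp (real n * h \<delta>)" by (intro mult_right_mono) (auto simp: Cf_def)
      finally show "mat_opnorm (Dmat (word_comp (transl f s) \<omega>) y ** matrix_inv (Dstar (word_comp (transl f t) \<omega>) z))
             \<le> Cf * exp (real n * h \<delta>)" .
    qed
  qed
  show ?thesis using hpos hlim hbound by blast
qed

end


theorem proposition4p2:
  fixes S U :: "(real^('d::{finite,linorder})) set"
    and f :: "'l::finite \<Rightarrow> real^('d::{finite,linorder}) \<Rightarrow> real^('d::{finite,linorder})"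
    and r0 :: real
  assumes ell: "CARD('l) \<ge> 2"
    and S_compact: "compact S" and S_int: "interior S \<noteq> {}"
    and maps_in: "\<forall>i. f i ` S \<subseteq> interior S"
    and U_bounded: "bounded U" and U_open: "open U" and U_conn: "connected U"
    and S_U: "S \<subseteq> U"
    and diffeo: "\<forall>i. contracting_C1_diffeo U (f i) \<and> closure (f i ` U) \<subseteq> U"
    and dom: "\<forall>i. \<forall>z\<in>S. dominated_lower_triangular (Dmat (f i) z)"
    and r0_pos: "r0 > 0"
    and r0_trans: "\<forall>t::real^('d::{finite,linorder})^'l. norm t < r0 \<longrightarrow> (\<forall>i. transl f t i ` S \<subseteq> interior S)"
  shows "\<exists>h::real \<Rightarrow> real.
           (\<forall>\<delta>\<in>{0<..<r0}. h \<delta> > 0) \<and> (h \<longlongrightarrow> 0) (at_right 0) \<and>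
           (\<forall>\<delta>\<in>{0<..<r0}. \<exists>C\<ge>1.
              \<forall>n::nat. \<forall>\<omega>::'l list. length \<omega> = n \<longrightarrow>
              (\<forall>y\<in>S. \<forall>z::'d::{finite,linorder} \<Rightarrow> real^('d::{finite,linorder}). (\<forall>k. z k \<in> S) \<longrightarrow>
               (\<forall>s t::real^('d::{finite,linorder})^'l. norm s < r0 \<longrightarrow> norm t < r0 \<longrightarrow> norm (s - t) < \<delta> \<longrightarrow>
                 mat_opnorm (Dmat (word_comp (transl f s) \<omega>) y **
                             matrix_inv (Dstar (word_comp (transl f t) \<omega>) z))
                   \<le> C * exp (real n * h \<delta>))))"
  proof -
  interpret ifs S U f r0
    by unfold_locales (fact S_compact U_open S_U diffeo dom r0_pos r0_trans)+
  show ?thesis by (rule main)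
qed

end
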